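(* In the setting described in the context, with probability $1-o(1)$ (as $m\to\infty$), for all pairs $(c_1,c_2)$ of consecutive elements of $C$, there exist at most $\log m$ items $i$ with $x_i(c_1)\ne x_i(c_2)$.
   Context: Two agents $a,b$, $m$ items, unknown utilities $u^a_i,u^b_i\in[0,1]$, additive. For an allocation (partition $(\mathcal{A}_a,\mathcal{A}_b)$ of $[m]$), $\mathrm{Envy}_{a\to b}=\sum_{i\in\mathcal{A}_b}u^a_i-\sum_{i\in\mathcal{A}_a}u^a_i$, $\mathrm{Envy}_{b\to a}=\sum_{i\in\mathcal{A}_a}u^b_i-\sum_{i\in\mathcal{A}_b}u^b_i$, $\mathrm{Envy}=\max$ of the two; assume $\min_{\mathcal{A}}\mathrm{Envy}(\mathcal{A})\le-\Delta$, with $\Delta=\Delta(m)$, $\Delta\ge m^{1/4}\log^2m$, $\Delta=o(m/\log m)$. Noise variance is $\sigma^2=1$ and $q=m\lceil15\frac{m^{3/2}}{\Delta^2}\log m+\log^2m\rceil$. Each item $i$ is queried $q/m$ times, each query returning independent $y^a\sim N(u^a_i,1)$, $y^b\sim N(u^b_i,1)$, and $v^\nu_i$ is the average of agent $\nu$'s observations for item $i$ (so $v^\nu_i\sim N(u^\nu_i,m/q)$, all independent). For $c>0$, $x_i(c)=1$ if $cv^a_i>v^b_i$ and $x_i(c)=-1$ otherwise. $C=\{k/m^3:k=1,2,\dots,m^6\}$, and consecutive elements are $k/m^3,(k+1)/m^3$. $\log$ is natural. *)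

theory Defs
  imports "HOL-Probability.Probability" "HOL-Library.Landau_Symbols"
begin

text \<open>Items are 0..m-1.  An allocation is the set A of items given to agent a;
  agent b receives the complement within the items.\<close>

definition envy_ab :: "nat \<Rightarrow> (nat \<Rightarrow> real) \<Rightarrow> nat set \<Rightarrow> real" where
  "envy_ab m ua A = (\<Sum>i\<in>{..<m} - A. ua i) - (\<Sum>i\<in>A. ua i)"

definition envy_ba :: "nat \<Rightarrow> (nat \<Rightarrow> real) \<Rightarrow> nat set \<Rightarrow> real" where
  "envy_ba m ub A = (\<Sum>i\<in>A. ub i) - (\<Sum>i\<in>{..<m} - A. ub i)"

definition envy :: "nat \<Rightarrow> (nat \<Rightarrow> real) \<Rightarrow> (nat \<Rightarrow> real) \<Rightarrow> nat set \<Rightarrow> real" where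
  "envy m ua ub A = max (envy_ab m ua A) (envy_ba m ub A)"

definition queries_per_item :: "nat \<Rightarrow> real \<Rightarrow> nat" where
  "queries_per_item m D =
     nat \<lceil>15 * real m powr (3/2) / D\<^sup>2 * ln (real m) + (ln (real m))\<^sup>2\<rceil>"

definition num_queries :: "nat \<Rightarrow> real \<Rightarrow> nat" where
  "num_queries m D = m * queries_per_item m D"

text \<open>Distribution of the averaged observations: for each item i < m, the pair
  (v^a_i, v^b_i) with v^a_i ~ N(u^a_i, m/q), v^b_i ~ N(u^b_i, m/q), all independent.
  (normal_density takes the standard deviation.)\<close>

definition avg_obs :: "nat \<Rightarrow> real \<Rightarrow> (nat \<Rightarrow> real) \<Rightarrow> (nat \<Rightarrow> real) \<Rightarrow> (nat \<Rightarrow> real \<times> real) measure" where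
  "avg_obs m D ua ub =
     (let s = sqrt (real m / real (num_queries m D)) in
      PiM {..<m} (\<lambda>i. density lborel (normal_density (ua i) s)
                     \<Otimes>\<^sub>M density lborel (normal_density (ub i) s)))"

definition xval :: "real \<Rightarrow> real \<times> real \<Rightarrow> int" where
  "xval c v = (if c * fst v > snd v then 1 else -1)"

text \<open>The event: for all consecutive pairs (k/m^3, (k+1)/m^3) of C = {k/m^3 : 1 \<le> k \<le> m^6},
  at most log m items change their x-value.\<close>

definition few_flips :: "nat \<Rightarrow> (nat \<Rightarrow> real \<times> real) \<Rightarrow> bool" where
  "few_flips m \<omega> =
     (\<forall>k::nat. 1 \<le> k \<and> k + 1 \<le> m ^ 6 \<longrightarrow>
        real (card {i\<in>{..<m}. xval (real k / real m ^ 3) (\<omega> i)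
                               \<noteq> xval (real (k + 1) / real m ^ 3) (\<omega> i)}) \<le> ln (real m))"

end

theory Submission
  imports Defs
begin


lemma nd_le: assumes "s > 0" shows "normal_density \<mu> s x \<le> 1 / s"
proof -
  have "exp (-(x - \<mu>)\<^sup>2/ (2 * s\<^sup>2)) \<le> 1" by simp
  moreover have "sqrt (2 * pi * s\<^sup>2) = sqrt (2*pi) * s" using assms
    by (simp add: real_sqrt_mult)
  moreover have "sqrt (2*pi) \<ge> 1" using pi_gt3 by simp
  ultimately have "1 / sqrt (2 * pi * s\<^sup>2) \<le> 1 / s" using assms
    by (simp add: divide_simps)
  moreover have "1 / sqrt (2 * pi * s\<^sup>2) \<ge> 0" by simp
  ultimately show ?thesis unfolding normal_density_def
    by (metis \<open>exp _ \<le> 1\<close> exp_ge_zero mult_left_le order_trans)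
qed

lemma interval_bound:
  assumes "s > 0" "a \<le> b"
  shows "emeasure (density lborel (normal_density \<mu> s)) {a..b} \<le> ennreal ((b - a) / s)"
proof -
  have "emeasure (density lborel (normal_density \<mu> s)) {a..b}
      = (\<integral>\<^sup>+x. ennreal (normal_density \<mu> s x) * indicator {a..b} x \<partial>lborel)"
    by (simp add: emeasure_density)
  also have "\<dots> \<le> (\<integral>\<^sup>+x. ennreal (1/s) * indicator {a..b} x \<partial>lborel)"
    by (intro nn_integral_mono) (auto simp: indicator_def nd_le[OF assms(1)] intro!: ennreal_leI)
  also have "\<dots> = ennreal (1/s) * emeasure lborel {a..b}"
    by (simp add: nn_integral_cmult_indicator)
  also have "\<dots> = ennreal ((b - a) / s)" using assms
    by (simp add: ennreal_mult'[symmetric] divide_simps mult.commute)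
  finally show ?thesis .
qed



lemma abs_moment_bound:
  assumes "s > 0" "c \<ge> 0"
  shows "(\<integral>\<^sup>+x. ennreal (c * \<bar>x\<bar>) \<partial>density lborel (normal_density \<mu> s)) \<le> ennreal (c * (\<bar>\<mu>\<bar> + s))"
proof -
  let ?f = "\<lambda>x. c * (normal_density \<mu> s x * \<bar>x - \<mu>\<bar> ^ 1) + (c * \<bar>\<mu>\<bar>) * normal_density \<mu> s x"
  have int: "integrable lborel ?f"
    using integrable_normal_moment_abs[where \<mu>=\<mu> and \<sigma>=s and k=1, OF assms(1)] integrable_normal_density[where \<mu>=\<mu> and \<sigma>=s, OF assms(1)] by auto
  have "(\<integral>\<^sup>+x. ennreal (c * \<bar>x\<bar>) \<partial>density lborel (normal_density \<mu> s))
      = (\<integral>\<^sup>+x. ennreal (normal_density \<mu> s x) * ennreal (c * \<bar>x\<bar>) \<partial>lborel)"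
    by (subst nn_integral_density) auto
  also have "\<dots> \<le> (\<integral>\<^sup>+x. ennreal (?f x) \<partial>lborel)"
  proof (intro nn_integral_mono)
    fix x
    have "normal_density \<mu> s x * (c * \<bar>x\<bar>) \<le> ?f x"
    proof -
      have "\<bar>x\<bar> \<le> \<bar>x - \<mu>\<bar> + \<bar>\<mu>\<bar>" by linarith
      hence "c * \<bar>x\<bar> \<le> c * (\<bar>x - \<mu>\<bar> + \<bar>\<mu>\<bar>)" using assms by (intro mult_left_mono) auto
      hence "normal_density \<mu> s x * (c * \<bar>x\<bar>) \<le> normal_density \<mu> s x * (c * (\<bar>x - \<mu>\<bar> + \<bar>\<mu>\<bar>))"
        by (intro mult_left_mono) (auto simp: assms)
      thus ?thesis by (simp add: algebra_simps)
    qed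
    thus "ennreal (normal_density \<mu> s x) * ennreal (c * \<bar>x\<bar>) \<le> ennreal (?f x)"
      using assms by (subst ennreal_mult'[symmetric]) (auto intro!: ennreal_leI simp del: ennreal_plus)
  qed
  also have "\<dots> = ennreal (integral\<^sup>L lborel ?f)"
    using int assms by (intro nn_integral_eq_integral) auto
  also have "integral\<^sup>L lborel ?f = c * (s * sqrt (2/pi)) + c * \<bar>\<mu>\<bar>"
    using integral_normal_moment_abs_odd[where \<mu>=\<mu> and \<sigma>=s and k=0, OF assms(1)]
      integrable_normal_moment_abs[where \<mu>=\<mu> and \<sigma>=s and k=1, OF assms(1)] integrable_normal_density[where \<mu>=\<mu> and \<sigma>=s, OF assms(1)]
    by (simp add: integral_add integral_mult_right integral_normal_density[where \<mu>=\<mu> and \<sigma>=s, OF assms(1)])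
  also have "\<dots> \<le> c * (\<bar>\<mu>\<bar> + s)"
  proof -
    have "sqrt (2/pi) \<le> 1" using pi_gt3 by simp
    hence "s * sqrt (2/pi) \<le> s" using assms by (simp add: mult_left_le)
    thus ?thesis using assms by (simp add: algebra_simps mult_left_mono)
  qed
  finally show ?thesis by (simp add: ennreal_leI)
qed



lemma item_bound:
  assumes s: "s > 0" and d: "\<delta> \<ge> 0"
  shows "emeasure (density lborel (normal_density \<mu>1 s) \<Otimes>\<^sub>M density lborel (normal_density \<mu>2 s))
     {p \<in> space (density lborel (normal_density \<mu>1 s) \<Otimes>\<^sub>M density lborel (normal_density \<mu>2 s)).
        fst p \<noteq> 0 \<and> \<bar>snd p / fst p - t\<bar> \<le> \<delta>}
     \<le> ennreal (2 * \<delta> / s * (\<bar>\<mu>1\<bar> + s))"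
proof -
  define M1 where "M1 = density lborel (normal_density \<mu>1 s)"
  define M2 where "M2 = density lborel (normal_density \<mu>2 s)"
  define A where "A = {p \<in> space (M1 \<Otimes>\<^sub>M M2). fst p \<noteq> 0 \<and> \<bar>snd p / fst p - t\<bar> \<le> \<delta>}"
  interpret M2: prob_space M2 unfolding M2_def
    by (rule prob_space_normal_density[where \<mu>=\<mu>2 and \<sigma>=s, OF s])
  have A: "A \<in> sets (M1 \<Otimes>\<^sub>M M2)" unfolding A_def M1_def M2_def by measurable
  have "emeasure (M1 \<Otimes>\<^sub>M M2) A = (\<integral>\<^sup>+x. emeasure M2 (Pair x -` A) \<partial>M1)"
    by (rule M2.emeasure_pair_measure_alt[OF A])
  also have "\<dots> \<le> (\<integral>\<^sup>+x. ennreal (2 * \<delta> / s * \<bar>x\<bar>) \<partial>M1)"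
  proof (intro nn_integral_mono)
    fix x :: real
    show "emeasure M2 (Pair x -` A) \<le> ennreal (2 * \<delta> / s * \<bar>x\<bar>)"
    proof (cases "x = 0")
      case True
      hence "Pair x -` A = {}" unfolding A_def by auto
      thus ?thesis by simp
    next
      case False
      have "Pair x -` A \<subseteq> {x * t - \<bar>x\<bar> * \<delta> .. x * t + \<bar>x\<bar> * \<delta>}"
      proof
        fix y assume "y \<in> Pair x -` A"
        hence h: "\<bar>y / x - t\<bar> \<le> \<delta>" unfolding A_def by auto
        have "y - x * t = x * (y / x - t)" using False by (simp add: field_simps)
        hence "\<bar>y - x * t\<bar> = \<bar>x\<bar> * \<bar>y / x - t\<bar>" by (simp add: abs_mult)
        also have "\<dots> \<le> \<bar>x\<bar> * \<delta>" using h by (simp add: mult_left_mono)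
        finally show "y \<in> {x * t - \<bar>x\<bar> * \<delta> .. x * t + \<bar>x\<bar> * \<delta>}" by auto
      qed
      hence "emeasure M2 (Pair x -` A) \<le> emeasure M2 {x * t - \<bar>x\<bar> * \<delta> .. x * t + \<bar>x\<bar> * \<delta>}"
        by (intro emeasure_mono) (auto simp: M2_def)
      also have "\<dots> \<le> ennreal (((x * t + \<bar>x\<bar> * \<delta>) - (x * t - \<bar>x\<bar> * \<delta>)) / s)"
        unfolding M2_def using d by (intro interval_bound s) auto
      also have "((x * t + \<bar>x\<bar> * \<delta>) - (x * t - \<bar>x\<bar> * \<delta>)) / s = 2 * \<delta> / s * \<bar>x\<bar>"
        by (simp add: field_simps)
      finally show ?thesis .
    qed
  qed
  also have "\<dots> \<le> ennreal (2 * \<delta> / s * (\<bar>\<mu>1\<bar> + s))"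
    unfolding M1_def using s d by (intro abs_moment_bound) auto
  finally show ?thesis unfolding A_def M1_def M2_def .
qed



lemma distr_pair_PiM:
  assumes M: "\<And>k. k \<in> I \<Longrightarrow> prob_space (M k)" and ij: "i \<in> I" "j \<in> I" "i \<noteq> j"
  shows "distr (PiM I M) (M i \<Otimes>\<^sub>M M j) (\<lambda>\<omega>. (\<omega> i, \<omega> j)) = M i \<Otimes>\<^sub>M M j"
proof (rule pair_measure_eqI[symmetric])
  interpret Mi: prob_space "M i" using M ij by auto
  interpret Mj: prob_space "M j" using M ij by auto
  show "sigma_finite_measure (M i)" "sigma_finite_measure (M j)" by unfold_locales
  show "sets (M i \<Otimes>\<^sub>M M j) = sets (distr (PiM I M) (M i \<Otimes>\<^sub>M M j) (\<lambda>\<omega>. (\<omega> i, \<omega> j)))" by simp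
  fix A B assume A: "A \<in> sets (M i)" and B: "B \<in> sets (M j)"
  define F where "F = (\<lambda>k. if k = i then A else B)"
  have meas: "(\<lambda>\<omega>. (\<omega> i, \<omega> j)) \<in> measurable (PiM I M) (M i \<Otimes>\<^sub>M M j)"
    using ij by measurable
  have eq: "(\<lambda>\<omega>. (\<omega> i, \<omega> j)) -` (A \<times> B) \<inter> space (PiM I M) = prod_emb I M {i, j} (Pi\<^sub>E {i, j} F)"
    using ij by (auto simp: prod_emb_def space_PiM F_def PiE_iff)
  have "emeasure (distr (PiM I M) (M i \<Otimes>\<^sub>M M j) (\<lambda>\<omega>. (\<omega> i, \<omega> j))) (A \<times> B)
      = emeasure (PiM I M) (prod_emb I M {i, j} (Pi\<^sub>E {i, j} F))"
    using A B by (subst emeasure_distr[OF meas]) (auto simp: eq)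
  also have "\<dots> = (\<Prod>k\<in>{i,j}. emeasure (M k) (F k))"
    using ij A B by (intro emeasure_PiM_emb M) (auto simp: F_def)
  also have "\<dots> = emeasure (M i) A * emeasure (M j) B"
    using ij by (simp add: F_def)
  finally show "emeasure (M i) A * emeasure (M j) B =
      emeasure (distr (PiM I M) (M i \<Otimes>\<^sub>M M j) (\<lambda>\<omega>. (\<omega> i, \<omega> j))) (A \<times> B)" by simp
qed



definition close :: "real \<Rightarrow> real \<times> real \<Rightarrow> real \<times> real \<Rightarrow> bool" where
  "close \<delta> p q = (fst p \<noteq> 0 \<and> fst q \<noteq> 0 \<and> \<bar>snd p / fst p - snd q / fst q\<bar> \<le> \<delta>)"

lemma collision_bound:
  fixes ua ub :: "nat \<Rightarrow> real" and s :: real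
  defines "Mi \<equiv> \<lambda>k. density lborel (normal_density (ua k) s) \<Otimes>\<^sub>M density lborel (normal_density (ub k) s)"
  assumes s: "s > 0" and d: "\<delta> \<ge> 0" and ij: "i \<in> I" "j \<in> I" "i \<noteq> j" and ua: "\<bar>ua i\<bar> \<le> 1"
  shows "measure (PiM I Mi) {\<omega> \<in> space (PiM I Mi). close \<delta> (\<omega> i) (\<omega> j)} \<le> 2 * \<delta> / s * (1 + s)"
proof -
  have P: "prob_space (Mi k)" for k unfolding Mi_def
    by (intro prob_space_pair prob_space_normal_density s)
  interpret PI: prob_space "PiM I Mi" by (intro prob_space_PiM P)
  interpret Mj: prob_space "Mi j" by (rule P)
  interpret Mii: prob_space "Mi i" by (rule P)
  define C where "C = {qp \<in> space (Mi j \<Otimes>\<^sub>M Mi i). close \<delta> (snd qp) (fst qp)}"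
  have C: "C \<in> sets (Mi j \<Otimes>\<^sub>M Mi i)" unfolding C_def Mi_def close_def by measurable
  have meas: "(\<lambda>\<omega>. (\<omega> j, \<omega> i)) \<in> measurable (PiM I Mi) (Mi j \<Otimes>\<^sub>M Mi i)"
    using ij by measurable
  have eqset: "{\<omega> \<in> space (PiM I Mi). close \<delta> (\<omega> i) (\<omega> j)} = (\<lambda>\<omega>. (\<omega> j, \<omega> i)) -` C \<inter> space (PiM I Mi)"
    using ij by (auto simp: C_def space_PiM space_pair_measure Mi_def)
  have "emeasure (PiM I Mi) {\<omega> \<in> space (PiM I Mi). close \<delta> (\<omega> i) (\<omega> j)}
       = emeasure (distr (PiM I Mi) (Mi j \<Otimes>\<^sub>M Mi i) (\<lambda>\<omega>. (\<omega> j, \<omega> i))) C"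
    using C by (simp add: eqset emeasure_distr[OF meas])
  also have "\<dots> = emeasure (Mi j \<Otimes>\<^sub>M Mi i) C"
    using ij by (subst distr_pair_PiM) (auto intro: P)
  also have "\<dots> = (\<integral>\<^sup>+q. emeasure (Mi i) (Pair q -` C) \<partial>Mi j)"
    by (rule Mii.emeasure_pair_measure_alt[OF C])
  also have "\<dots> \<le> (\<integral>\<^sup>+q. ennreal (2 * \<delta> / s * (1 + s)) \<partial>Mi j)"
  proof (intro nn_integral_mono)
    fix q :: "real \<times> real"
    show "emeasure (Mi i) (Pair q -` C) \<le> ennreal (2 * \<delta> / s * (1 + s))"
    proof (cases "fst q = 0")
      case True
      hence "Pair q -` C = {}" unfolding C_def close_def by auto
      thus ?thesis by simp
    next
      case False
      have "Pair q -` C \<subseteq> {p \<in> space (Mi i). fst p \<noteq> 0 \<and> \<bar>snd p / fst p - snd q / fst q\<bar> \<le> \<delta>}"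
        unfolding C_def close_def by (auto simp: space_pair_measure Mi_def)
      hence "emeasure (Mi i) (Pair q -` C) \<le> emeasure (Mi i) {p \<in> space (Mi i). fst p \<noteq> 0 \<and> \<bar>snd p / fst p - snd q / fst q\<bar> \<le> \<delta>}"
        by (intro emeasure_mono) (auto simp: Mi_def)
      also have "\<dots> \<le> ennreal (2 * \<delta> / s * (\<bar>ua i\<bar> + s))"
        unfolding Mi_def by (intro item_bound s d)
      also have "\<dots> \<le> ennreal (2 * \<delta> / s * (1 + s))"
        using ua s d by (intro ennreal_leI mult_left_mono) auto
      finally show ?thesis .
    qed
  qed
  also have "\<dots> = ennreal (2 * \<delta> / s * (1 + s))"
    by (simp add: Mj.emeasure_space_1)
  finally show ?thesis
    using s d by (simp add: PI.emeasure_eq_measure ennreal_le_iff)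
qed



lemma flip_ratio:
  assumes "c1 < c2" "xval c1 v \<noteq> xval c2 v"
  shows "fst v \<noteq> 0 \<and> c1 \<le> snd v / fst v \<and> snd v / fst v \<le> c2"
proof -
  obtain a b where v: "v = (a, b)" by (cases v)
  have ne: "(c1 * a > b) \<noteq> (c2 * a > b)" using assms(2) by (auto simp: xval_def v split: if_splits)
  show ?thesis
  proof (cases a "0::real" rule: linorder_cases)
    case less
    hence "c2 * a < c1 * a" using assms(1) by simp
    with ne have "c2 * a \<le> b" "b < c1 * a" by auto
    hence "b / a \<le> c2" "c1 < b / a" using less by (simp_all add: neg_divide_le_eq neg_less_divide_eq)
    thus ?thesis using less by (simp add: v)
  next
    case equal thus ?thesis using ne by (simp add: v)
  next
    case greater
    hence "c1 * a < c2 * a" using assms(1) by simp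
    with ne have "c1 * a \<le> b" "b < c2 * a" by auto
    hence "c1 \<le> b / a" "b / a < c2" using greater by (simp_all add: pos_le_divide_eq pos_divide_less_eq)
    thus ?thesis using greater by (simp add: v)
  qed
qed

lemma ln_ge_1: "m \<ge> 3 \<Longrightarrow> ln (real m) \<ge> 1"
proof -
  assume "m \<ge> 3"
  hence "exp 1 \<le> real m" using exp_le by linarith
  hence "ln (exp 1) \<le> ln (real m)" using \<open>m \<ge> 3\<close> by (subst ln_le_cancel_iff) auto
  thus ?thesis by simp
qed

lemma not_few_flips:
  assumes "m \<ge> 3" "\<not> few_flips m \<omega>"
  shows "\<exists>i<m. \<exists>j<m. i \<noteq> j \<and> close (1 / real m ^ 3) (\<omega> i) (\<omega> j)"
proof -
  obtain k :: nat where k: "1 \<le> k" and S: "real (card {i\<in>{..<m}. xval (real k / real m ^ 3) (\<omega> i)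
                               \<noteq> xval (real (k + 1) / real m ^ 3) (\<omega> i)}) > ln (real m)"
    (is "real (card ?S) > _")
    using assms(2) unfolding few_flips_def not_all not_imp not_le by blast
  have "real (card ?S) > 1" using S ln_ge_1[OF assms(1)] by linarith
  hence c2: "card ?S > 1" by simp
  hence "0 < card ?S" by linarith
  hence "?S \<noteq> {}" using card_gt_0_iff by blast
  then obtain i where i: "i \<in> ?S" by blast
  have "card (?S - {i}) > 0" using c2 i by (simp add: card_Diff_singleton)
  hence "?S - {i} \<noteq> {}" using card_gt_0_iff by blast
  then obtain j where j: "j \<in> ?S - {i}" by blast
  let ?c1 = "real k / real m ^ 3" and ?c2 = "real (k + 1) / real m ^ 3"
  have m0: "real m ^ 3 > 0" using assms(1) by simp
  have lt: "?c1 < ?c2" using m0 by (simp add: divide_strict_right_mono)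
  have xi: "xval ?c1 (\<omega> i) \<noteq> xval ?c2 (\<omega> i)" using i by blast
  have xj: "xval ?c1 (\<omega> j) \<noteq> xval ?c2 (\<omega> j)" using j by blast
  note ri = flip_ratio[OF lt xi] and rj = flip_ratio[OF lt xj]
  define r1 where "r1 = snd (\<omega> i) / fst (\<omega> i)"
  define r2 where "r2 = snd (\<omega> j) / fst (\<omega> j)"
  define c1 where "c1 = ?c1"
  define c2 where "c2 = ?c2"
  have b1: "c1 \<le> r1" "r1 \<le> c2" "c1 \<le> r2" "r2 \<le> c2"
    using ri rj unfolding r1_def r2_def c1_def c2_def by blast+
  have "c2 - c1 = 1 / real m ^ 3" unfolding c1_def c2_def by (simp add: diff_divide_distrib[symmetric])
  moreover have "\<bar>r1 - r2\<bar> \<le> c2 - c1" using b1 by linarith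
  ultimately have "close (1 / real m ^ 3) (\<omega> i) (\<omega> j)" using ri rj unfolding close_def r1_def r2_def by simp
  moreover have "i < m" "j < m" "i \<noteq> j" using i j by auto
  ultimately show ?thesis by blast
qed



lemma few_flips_alt:
  "few_flips m \<omega> \<longleftrightarrow> (\<forall>k::nat. 1 \<le> k \<and> k + 1 \<le> m ^ 6 \<longrightarrow>
     (\<Sum>i<m. if (real k / real m ^ 3 * fst (\<omega> i) > snd (\<omega> i)) \<noteq> (real (k + 1) / real m ^ 3 * fst (\<omega> i) > snd (\<omega> i))
              then 1 else 0 :: real) \<le> ln (real m))"
proof -
  have "real (card {i\<in>{..<m}. xval a (\<omega> i) \<noteq> xval b (\<omega> i)})
     = (\<Sum>i<m. if (a * fst (\<omega> i) > snd (\<omega> i)) \<noteq> (b * fst (\<omega> i) > snd (\<omega> i)) then 1 else 0 :: real)" for a b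
  proof -
    have "real (card {i\<in>{..<m}. xval a (\<omega> i) \<noteq> xval b (\<omega> i)}) = (\<Sum>i\<in>{i\<in>{..<m}. xval a (\<omega> i) \<noteq> xval b (\<omega> i)}. 1)"
      by simp
    also have "\<dots> = (\<Sum>i<m. if xval a (\<omega> i) \<noteq> xval b (\<omega> i) then 1 else 0)"
      by (subst sum.inter_filter) auto
    also have "\<dots> = (\<Sum>i<m. if (a * fst (\<omega> i) > snd (\<omega> i)) \<noteq> (b * fst (\<omega> i) > snd (\<omega> i)) then 1 else 0 :: real)"
      by (intro sum.cong refl) (auto simp: xval_def)
    finally show ?thesis .
  qed
  thus ?thesis unfolding few_flips_def by simp
qed

lemma few_flips_meas:
  fixes ua ub :: "nat \<Rightarrow> real" and s :: real
  defines "Mi \<equiv> \<lambda>k. density lborel (normal_density (ua k) s) \<Otimes>\<^sub>M density lborel (normal_density (ub k) s)"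
  shows "{\<omega> \<in> space (PiM {..<m} Mi). few_flips m \<omega>} \<in> sets (PiM {..<m} Mi)"
proof -
  have f: "(\<lambda>\<omega>. \<Sum>i<m. if (a * fst (\<omega> i) > snd (\<omega> i)) \<noteq> (b * fst (\<omega> i) > snd (\<omega> i))
              then 1 else 0 :: real) \<in> borel_measurable (PiM {..<m} Mi)" for a b
  proof (intro borel_measurable_sum)
    fix i assume i: "i \<in> {..<m}"
    show "(\<lambda>\<omega>. if (a * fst (\<omega> i) > snd (\<omega> i)) \<noteq> (b * fst (\<omega> i) > snd (\<omega> i))
              then 1 else 0 :: real) \<in> borel_measurable (PiM {..<m} Mi)"
      using i unfolding Mi_def by measurable
  qed
  show ?thesis unfolding few_flips_alt
    using f by measurable
qed



lemma Q_bounds: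
  assumes m3: "m \<ge> 3" and D: "D \<ge> real m powr (1/4) * (ln (real m))\<^sup>2"
  shows "1 \<le> real (queries_per_item m D)" "real (queries_per_item m D) \<le> 20 * real m"
proof -
  define L where "L = ln (real m)"
  have L1: "L \<ge> 1" unfolding L_def using ln_ge_1[OF m3] .
  have mpos: "real m > 0" using m3 by simp
  define p where "p = real m powr (1/4)"
  have p0: "p > 0" unfolding p_def using mpos by simp
  have L2: "L\<^sup>2 \<ge> 1" using L1 by (simp add: one_le_power)
  have "D \<ge> p * L\<^sup>2" using D unfolding p_def L_def .
  moreover have "p * L\<^sup>2 \<ge> p * 1" using p0 L2 by (intro mult_left_mono) auto
  ultimately have Dp: "D \<ge> p" by simp
  hence D0: "D > 0" using p0 by simp
  have pp: "p\<^sup>2 = real m powr (1/2)" unfolding p_def power2_eq_square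
    by (simp add: powr_add[symmetric])
  have "D\<^sup>2 \<ge> (p * L\<^sup>2)\<^sup>2" using \<open>D \<ge> p * L\<^sup>2\<close> p0 L2 by (intro power_mono) auto
  hence D2: "D\<^sup>2 \<ge> real m powr (1/2) * L^4" by (simp add: power_mult_distrib pp flip: power_mult)
  have L4: "L \<le> L^4" using power_increasing[of 1 4 L] L1 by simp
  have "real m powr (1/2) * L \<le> real m powr (1/2) * L^4" using L4 by (intro mult_left_mono) auto
  hence hD: "real m powr (1/2) * L \<le> D\<^sup>2" using D2 by linarith
  have m32: "real m powr (3/2) = real m * real m powr (1/2)"
  proof -
    have "real m powr (3/2) = real m powr (1 + 1/2)" by simp
    also have "\<dots> = real m powr 1 * real m powr (1/2)" by (rule powr_add)
    finally show ?thesis using mpos by simp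
  qed
  have T1: "15 * real m powr (3/2) / D\<^sup>2 * L \<le> 15 * real m"
  proof -
    have "15 * real m powr (3/2) * L = 15 * real m * (real m powr (1/2) * L)" by (simp add: m32)
    also have "\<dots> \<le> 15 * real m * D\<^sup>2" using hD mpos by (intro mult_left_mono) auto
    finally show ?thesis using D0 by (simp add: divide_simps)
  qed
  have T1': "15 * real m powr (3/2) / D\<^sup>2 * L \<ge> 0" using L1 by simp
  have "L = 2 * ln (sqrt (real m))" unfolding L_def using mpos by (simp add: ln_sqrt)
  also have "\<dots> \<le> 2 * (sqrt (real m) - 1)"
  proof -
    have "ln (sqrt (real m)) \<le> sqrt (real m) - 1" using mpos by (intro ln_le_minus_one) simp
    thus ?thesis by simp
  qed
  finally have "L \<le> 2 * sqrt (real m)" by simp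
  hence "L\<^sup>2 \<le> (2 * sqrt (real m))\<^sup>2" using L1 by (intro power_mono) auto
  hence T2: "L\<^sup>2 \<le> 4 * real m" using mpos by (simp add: power_mult_distrib)
  define X where "X = 15 * real m powr (3/2) / D\<^sup>2 * L + L\<^sup>2"
  have X1: "X \<ge> 1" unfolding X_def using T1' L2 by linarith
  have X2: "X \<le> 19 * real m" unfolding X_def using T1 T2 by linarith
  have Q: "queries_per_item m D = nat \<lceil>X\<rceil>" unfolding queries_per_item_def X_def L_def ..
  have c0: "\<lceil>X\<rceil> \<ge> 1" using X1 by linarith
  have rQ: "real (queries_per_item m D) = real_of_int \<lceil>X\<rceil>" unfolding Q using c0 by simp
  show "1 \<le> real (queries_per_item m D)" unfolding rQ using X1 by linarith
  show "real (queries_per_item m D) \<le> 20 * real m" unfolding rQ using X2 m3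
  proof -
    have "real_of_int \<lceil>X\<rceil> \<le> X + 1" by (rule of_int_ceiling_le_add_one)
    moreover have "real m \<ge> 3" using m3 by simp
    ultimately show "real_of_int \<lceil>X\<rceil> \<le> 20 * real m" using X2 by linarith
  qed
qed



theorem lemma14:
  fixes \<Delta> :: "nat \<Rightarrow> real"
  assumes lower: "\<forall>m. \<Delta> m \<ge> real m powr (1/4) * (ln (real m))\<^sup>2"
    and upper: "\<Delta> \<in> o(\<lambda>m. real m / ln (real m))"
  shows "\<forall>\<epsilon>>0. \<exists>M. \<forall>m\<ge>M. \<forall>ua ub :: nat \<Rightarrow> real.
           (\<forall>i<m. 0 \<le> ua i \<and> ua i \<le> 1 \<and> 0 \<le> ub i \<and> ub i \<le> 1) \<and>
           (\<exists>A\<subseteq>{..<m}. envy m ua ub A \<le> - \<Delta> m) \<longrightarrow>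
           measure (avg_obs m (\<Delta> m) ua ub)
             {\<omega> \<in> space (avg_obs m (\<Delta> m) ua ub). few_flips m \<omega>} \<ge> 1 - \<epsilon>"
proof (intro allI impI)
  fix \<epsilon> :: real assume \<epsilon>: "\<epsilon> > 0"
  define M where "M = nat \<lceil>320 / \<epsilon>\<^sup>2\<rceil> + 3"
  show "\<exists>M. \<forall>m\<ge>M. \<forall>ua ub :: nat \<Rightarrow> real.
           (\<forall>i<m. 0 \<le> ua i \<and> ua i \<le> 1 \<and> 0 \<le> ub i \<and> ub i \<le> 1) \<and>
           (\<exists>A\<subseteq>{..<m}. envy m ua ub A \<le> - \<Delta> m) \<longrightarrow>
           measure (avg_obs m (\<Delta> m) ua ub)
             {\<omega> \<in> space (avg_obs m (\<Delta> m) ua ub). few_flips m \<omega>} \<ge> 1 - \<epsilon>"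
  proof (intro exI[of _ M] allI impI)
    fix m :: nat and ua ub :: "nat \<Rightarrow> real"
    assume mM: "M \<le> m"
    assume H: "(\<forall>i<m. 0 \<le> ua i \<and> ua i \<le> 1 \<and> 0 \<le> ub i \<and> ub i \<le> 1) \<and>
           (\<exists>A\<subseteq>{..<m}. envy m ua ub A \<le> - \<Delta> m)"
    have ua: "\<bar>ua i\<bar> \<le> 1" if "i < m" for i using H that by auto
    have m3: "m \<ge> 3" using mM unfolding M_def by simp
    have "real m \<ge> real (nat \<lceil>320 / \<epsilon>\<^sup>2\<rceil>)" using mM unfolding M_def by simp
    hence mE: "real m \<ge> 320 / \<epsilon>\<^sup>2" by linarith
    define D where "D = \<Delta> m"
    define Q where "Q = queries_per_item m D"
    have Q1: "1 \<le> real Q" and Q2: "real Q \<le> 20 * real m"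
      unfolding Q_def using Q_bounds[OF m3, of D] lower unfolding D_def by auto
    have mpos: "real m > 0" using m3 by simp
    define s where "s = sqrt (real m / real (num_queries m D))"
    have "real (num_queries m D) = real m * real Q" unfolding num_queries_def Q_def by simp
    hence "real m / real (num_queries m D) = 1 / real Q" using mpos by simp
    hence s_eq: "s = 1 / sqrt (real Q)" unfolding s_def by (simp add: real_sqrt_divide)
    have sqQ: "sqrt (real Q) \<ge> 1" using Q1 by simp
    have s0: "s > 0" unfolding s_eq using sqQ by simp
    have s1: "s \<le> 1" unfolding s_eq using sqQ by simp
    define Mi where "Mi = (\<lambda>k. density lborel (normal_density (ua k) s) \<Otimes>\<^sub>M density lborel (normal_density (ub k) s))"
    have N: "avg_obs m (\<Delta> m) ua ub = PiM {..<m} Mi"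
      unfolding avg_obs_def Let_def Mi_def s_def D_def ..
    have P: "prob_space (Mi k)" for k unfolding Mi_def
      by (intro prob_space_pair prob_space_normal_density s0)
    interpret PI: prob_space "PiM {..<m} Mi" by (intro prob_space_PiM P)
    define \<delta> where "\<delta> = 1 / real m ^ 3"
    have d0: "\<delta> \<ge> 0" unfolding \<delta>_def by simp
    define E where "E = (\<lambda>p. {\<omega> \<in> space (PiM {..<m} Mi). close \<delta> (\<omega> (fst p)) (\<omega> (snd p))})"
    define PP where "PP = {p \<in> {..<m} \<times> {..<m}. fst p \<noteq> snd p}"
    have PPfin: "finite PP" unfolding PP_def by auto
    have cardPP: "card PP \<le> m * m"
    proof -
      have "card PP \<le> card ({..<m} \<times> {..<m})" unfolding PP_def by (intro card_mono) auto
      thus ?thesis by (simp add: card_cartesian_product)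
    qed
    have Esets: "E p \<in> sets (PiM {..<m} Mi)" if "p \<in> PP" for p
    proof -
      have "fst p \<in> {..<m}" "snd p \<in> {..<m}" using that unfolding PP_def by auto
      thus ?thesis unfolding E_def close_def Mi_def by measurable
    qed
    define U where "U = (\<Union>p\<in>PP. E p)"
    have Usets: "U \<in> sets (PiM {..<m} Mi)" unfolding U_def using Esets PPfin by auto
    have sub: "space (PiM {..<m} Mi) - U \<subseteq> {\<omega> \<in> space (PiM {..<m} Mi). few_flips m \<omega>}"
    proof
      fix \<omega> assume w: "\<omega> \<in> space (PiM {..<m} Mi) - U"
      show "\<omega> \<in> {\<omega> \<in> space (PiM {..<m} Mi). few_flips m \<omega>}"
      proof (rule ccontr)
        assume "\<omega> \<notin> {\<omega> \<in> space (PiM {..<m} Mi). few_flips m \<omega>}"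
        hence "\<not> few_flips m \<omega>" using w by auto
        from not_few_flips[OF m3 this] obtain i j where "i < m" "j < m" "i \<noteq> j"
          "close (1 / real m ^ 3) (\<omega> i) (\<omega> j)" by blast
        hence "\<omega> \<in> E (i, j)" "(i, j) \<in> PP" using w unfolding E_def PP_def \<delta>_def by auto
        hence "\<omega> \<in> U" unfolding U_def by blast
        thus False using w by blast
      qed
    qed
    have Fsets: "{\<omega> \<in> space (PiM {..<m} Mi). few_flips m \<omega>} \<in> sets (PiM {..<m} Mi)"
      unfolding Mi_def by (rule few_flips_meas)
    have "PI.prob (space (PiM {..<m} Mi) - U) \<le> PI.prob {\<omega> \<in> space (PiM {..<m} Mi). few_flips m \<omega>}"
      by (rule PI.finite_measure_mono[OF sub Fsets])
    moreover have "PI.prob (space (PiM {..<m} Mi) - U) = 1 - PI.prob U"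
      by (rule PI.prob_compl[OF Usets])
    moreover have "PI.prob U \<le> (\<Sum>p\<in>PP. PI.prob (E p))"
      unfolding U_def using PPfin Esets by (intro PI.finite_measure_subadditive_finite) auto
    moreover have "(\<Sum>p\<in>PP. PI.prob (E p)) \<le> (\<Sum>p\<in>PP. 2 * \<delta> / s * (1 + s))"
    proof (intro sum_mono)
      fix p assume p: "p \<in> PP"
      hence "fst p \<in> {..<m}" "snd p \<in> {..<m}" "fst p \<noteq> snd p" "\<bar>ua (fst p)\<bar> \<le> 1"
        unfolding PP_def using ua by auto
      thus "PI.prob (E p) \<le> 2 * \<delta> / s * (1 + s)"
        unfolding E_def Mi_def by (intro collision_bound s0 d0)
    qed
    moreover have "(\<Sum>p\<in>PP. 2 * \<delta> / s * (1 + s)) \<le> \<epsilon>"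
    proof -
      have B: "2 * \<delta> / s * (1 + s) \<le> 4 * \<delta> * sqrt (real Q)"
      proof -
        have "2 * \<delta> / s * (1 + s) \<le> 2 * \<delta> / s * 2"
          using s1 s0 d0 by (intro mult_left_mono) auto
        also have "2 * \<delta> / s * 2 = 4 * \<delta> * sqrt (real Q)" unfolding s_eq using sqQ by simp
        finally show ?thesis .
      qed
      have "(\<Sum>p\<in>PP. 2 * \<delta> / s * (1 + s)) = real (card PP) * (2 * \<delta> / s * (1 + s))" by simp
      also have "\<dots> \<le> real (m * m) * (4 * \<delta> * sqrt (real Q))"
      proof (rule mult_mono)
        show "real (card PP) \<le> real (m * m)" using cardPP by (simp only: of_nat_le_iff)
        show "2 * \<delta> / s * (1 + s) \<le> 4 * \<delta> * sqrt (real Q)" by (rule B)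
        show "0 \<le> real (m * m)" by simp
        show "0 \<le> 2 * \<delta> / s * (1 + s)" using s0 d0 by simp
      qed
      also have "\<dots> = 4 * sqrt (real Q) / real m"
        unfolding \<delta>_def using mpos by (simp add: power3_eq_cube field_simps)
      also have "\<dots> \<le> \<epsilon>"
      proof -
        have "\<epsilon>\<^sup>2 * real m \<ge> 320" using mE \<epsilon> by (simp add: field_simps)
        hence "320 * real m \<le> (\<epsilon>\<^sup>2 * real m) * real m"
          using mpos by (intro mult_right_mono) auto
        moreover have "(\<epsilon> * real m)\<^sup>2 = (\<epsilon>\<^sup>2 * real m) * real m"
          by (simp add: power2_eq_square)
        ultimately have "16 * real Q \<le> (\<epsilon> * real m)\<^sup>2"
          using Q2 by linarith
        hence "sqrt (16 * real Q) \<le> sqrt ((\<epsilon> * real m)\<^sup>2)"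
          by (rule real_sqrt_le_mono)
        also have "sqrt ((\<epsilon> * real m)\<^sup>2) = \<epsilon> * real m" using \<epsilon> mpos by simp
        finally have "sqrt (16 * real Q) \<le> \<epsilon> * real m" .
        hence "4 * sqrt (real Q) \<le> \<epsilon> * real m" by (simp add: real_sqrt_mult)
        thus ?thesis using mpos by (simp add: divide_simps mult.commute)
      qed
      finally show ?thesis .
    qed
    ultimately have "PI.prob {\<omega> \<in> space (PiM {..<m} Mi). few_flips m \<omega>} \<ge> 1 - \<epsilon>" by linarith
    thus "measure (avg_obs m (\<Delta> m) ua ub)
             {\<omega> \<in> space (avg_obs m (\<Delta> m) ua ub). few_flips m \<omega>} \<ge> 1 - \<epsilon>"
      unfolding N .
  qed
qed

end
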